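(* Let $\mathcal C$ be a coalgebra, $g\in\mathcal C$ a group-like element and $\Lambda\in\mathcal C$. If $g\in{}_\Lambda\mathcal V$ then $\dim L^g_{\mathcal V_\Lambda}=1$, and otherwise $\dim L^g_{\mathcal V_\Lambda}=0$. Moreover, an element $\phi\in L^g_{\mathcal V_\Lambda}$ is non-zero if and only if $\phi(\Lambda)\neq0$.
   Context: $k$ is a field; $\mathcal C$ is a coalgebra over $k$ with comultiplication $\Delta$ and dual $\mathcal C'$. A group-like element is a non-zero $g$ with $\Delta(g)=g\otimes g$. A left coideal is a subspace $V$ with $\Delta(V)\subset\mathcal C\otimes V$. For $\Lambda\in\mathcal C$, $\mathcal V_\Lambda=\{(\nu\otimes\mathrm{id})\Delta(\Lambda):\nu\in\mathcal C'\}$ (the smallest left coideal containing $\Lambda$) and ${}_\Lambda\mathcal V=\{(\mathrm{id}\otimes\nu)\Delta(\Lambda):\nu\in\mathcal C'\}$. For a left coideal $V$ and group-like $g$, a $g$-cointegral on $V$ is $\phi\in V'$ with $(\mathrm{id}\otimes\phi)(\Delta(a))=\phi(a)g$ for all $a\in V$; $L^g_V$ denotes the space of $g$-cointegrals on $V$. *)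

theory Defs
  imports Complex_Main "HOL-Library.Function_Algebras"
begin

text \<open>A tensor in C (x) C is
represented by a finite list of pairs [(x_1,y_1),...,(x_n,y_n)], standing for
the sum of x_i (x) y_i.  Since for vector spaces a tensor is determined by its
values on all mu (x) nu (mu, nu linear functionals), all equations between
tensors are stated through such evaluations, so that nothing depends on the
chosen representative.\<close>

definition lin_fun :: "('k::field \<Rightarrow> 'c::ab_group_add \<Rightarrow> 'c) \<Rightarrow> ('c \<Rightarrow> 'k) \<Rightarrow> bool" where
  "lin_fun sc \<nu> \<longleftrightarrow> (\<forall>x y. \<nu> (x + y) = \<nu> x + \<nu> y) \<and> (\<forall>c x. \<nu> (sc c x) = c * \<nu> x)"

definition tens_eval :: "('c \<Rightarrow> 'k::field) \<Rightarrow> ('c \<Rightarrow> 'k) \<Rightarrow> ('c \<times> 'c) list \<Rightarrow> 'k" where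
  "tens_eval \<mu> \<nu> t = (\<Sum>(x,y)\<leftarrow>t. \<mu> x * \<nu> y)"

definition lslice :: "('k::field \<Rightarrow> 'c::ab_group_add \<Rightarrow> 'c) \<Rightarrow> ('c \<Rightarrow> 'k) \<Rightarrow> ('c \<times> 'c) list \<Rightarrow> 'c" where
  "lslice sc \<nu> t = (\<Sum>(x,y)\<leftarrow>t. sc (\<nu> x) y)"

definition rslice :: "('k::field \<Rightarrow> 'c::ab_group_add \<Rightarrow> 'c) \<Rightarrow> ('c \<Rightarrow> 'k) \<Rightarrow> ('c \<times> 'c) list \<Rightarrow> 'c" where
  "rslice sc \<nu> t = (\<Sum>(x,y)\<leftarrow>t. sc (\<nu> y) x)"

definition coalgebra :: "('k::field \<Rightarrow> 'c::ab_group_add \<Rightarrow> 'c) \<Rightarrow> ('c \<Rightarrow> ('c \<times> 'c) list) \<Rightarrow> bool" where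
  "coalgebra sc \<Delta> \<longleftrightarrow>
     vector_space sc \<and>
     (\<forall>\<mu> \<nu>. lin_fun sc \<mu> \<and> lin_fun sc \<nu> \<longrightarrow> lin_fun sc (\<lambda>a. tens_eval \<mu> \<nu> (\<Delta> a))) \<and>
     (\<forall>\<mu> \<nu> \<rho> a. lin_fun sc \<mu> \<and> lin_fun sc \<nu> \<and> lin_fun sc \<rho> \<longrightarrow>
        (\<Sum>(x,y)\<leftarrow>\<Delta> a. tens_eval \<mu> \<nu> (\<Delta> x) * \<rho> y)
        = (\<Sum>(x,y)\<leftarrow>\<Delta> a. \<mu> x * tens_eval \<nu> \<rho> (\<Delta> y))) \<and>
     (\<exists>\<epsilon>. lin_fun sc \<epsilon> \<and> (\<forall>a. lslice sc \<epsilon> (\<Delta> a) = a \<and> rslice sc \<epsilon> (\<Delta> a) = a))"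

definition group_like :: "('k::field \<Rightarrow> 'c::ab_group_add \<Rightarrow> 'c) \<Rightarrow> ('c \<Rightarrow> ('c \<times> 'c) list) \<Rightarrow> 'c \<Rightarrow> bool" where
  "group_like sc \<Delta> g \<longleftrightarrow> g \<noteq> 0 \<and>
     (\<forall>\<mu> \<nu>. lin_fun sc \<mu> \<and> lin_fun sc \<nu> \<longrightarrow> tens_eval \<mu> \<nu> (\<Delta> g) = \<mu> g * \<nu> g)"

definition V_left :: "('k::field \<Rightarrow> 'c::ab_group_add \<Rightarrow> 'c) \<Rightarrow> ('c \<Rightarrow> ('c \<times> 'c) list) \<Rightarrow> 'c \<Rightarrow> 'c set" where
  "V_left sc \<Delta> \<Lambda> = {lslice sc \<nu> (\<Delta> \<Lambda>) | \<nu>. lin_fun sc \<nu>}"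

definition V_right :: "('k::field \<Rightarrow> 'c::ab_group_add \<Rightarrow> 'c) \<Rightarrow> ('c \<Rightarrow> ('c \<times> 'c) list) \<Rightarrow> 'c \<Rightarrow> 'c set" where
  "V_right sc \<Delta> \<Lambda> = {rslice sc \<nu> (\<Delta> \<Lambda>) | \<nu>. lin_fun sc \<nu>}"

text \<open>An element of the
dual V' is represented by a function 'c \<Rightarrow> 'k that is linear on V and vanishes
outside V (canonical representative).  Since Delta(V) lies in C (x) V, the
expression (id (x) phi)(Delta a) is computed with any linear extension psi of
phi to C (the value does not depend on the extension).\<close>
definition cointegrals :: "('k::field \<Rightarrow> 'c::ab_group_add \<Rightarrow> 'c) \<Rightarrow> ('c \<Rightarrow> ('c \<times> 'c) list) \<Rightarrow> 'c \<Rightarrow> 'c set \<Rightarrow> ('c \<Rightarrow> 'k) set" where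
  "cointegrals sc \<Delta> g V = {\<phi>.
     (\<forall>x\<in>V. \<forall>y\<in>V. \<phi> (x + y) = \<phi> x + \<phi> y) \<and>
     (\<forall>c. \<forall>x\<in>V. \<phi> (sc c x) = c * \<phi> x) \<and>
     (\<forall>x. x \<notin> V \<longrightarrow> \<phi> x = 0) \<and>
     (\<forall>\<psi>. lin_fun sc \<psi> \<and> (\<forall>x\<in>V. \<psi> x = \<phi> x) \<longrightarrow>
        (\<forall>a\<in>V. rslice sc \<psi> (\<Delta> a) = sc (\<phi> a) g))}"

definition fun_dim :: "('c \<Rightarrow> 'k::field) set \<Rightarrow> nat" where
  "fun_dim S = vector_space.dim (\<lambda>c f x. c * f x) S"

end

theory Submission imports Defs begin

lemma vs_mult: "vector_space ((*) :: 'k::field \<Rightarrow> 'k \<Rightarrow> 'k)"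
  by unfold_locales (simp_all add: algebra_simps)

lemma vs_fun: "vector_space (\<lambda>c (f::'c \<Rightarrow> 'k::field) x. c * f x)"
  by unfold_locales (simp_all add: fun_eq_iff algebra_simps)

lemma lin_zero: "lin_fun sc \<rho> \<Longrightarrow> \<rho> 0 = 0"
  unfolding lin_fun_def by (metis add.right_neutral add_left_cancel)

lemma lin_sum: "lin_fun sc \<rho> \<Longrightarrow> \<rho> (\<Sum>(x,y)\<leftarrow>t. F x y) = (\<Sum>(x,y)\<leftarrow>t. \<rho> (F x y))"
  by (induction t) (auto simp: lin_zero, simp add: lin_fun_def)

lemma tens_scale: "tens_eval \<mu> (\<lambda>x. c * \<nu> x) t = c * tens_eval \<mu> \<nu> t"
  unfolding tens_eval_def by (induction t) (auto simp: algebra_simps)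

context vector_space begin

lemma lin_lslice: "lin_fun scale \<rho> \<Longrightarrow> \<rho> (lslice scale \<nu> t) = tens_eval \<nu> \<rho> t"
  unfolding lslice_def tens_eval_def
  by (induction t) (auto simp: lin_zero, simp add: lin_fun_def)

lemma lin_rslice: "lin_fun scale \<rho> \<Longrightarrow> \<rho> (rslice scale \<nu> t) = tens_eval \<rho> \<nu> t"
  unfolding rslice_def tens_eval_def
  by (induction t) (auto simp: lin_zero, simp add: lin_fun_def mult.commute)

lemma lslice_add: "lslice scale (\<lambda>x. \<mu> x + \<nu> x) t = lslice scale \<mu> t + lslice scale \<nu> t"
  unfolding lslice_def by (induction t) (auto simp: scale_left_distrib algebra_simps)

lemma lslice_scale: "lslice scale (\<lambda>x. c * \<nu> x) t = scale c (lslice scale \<nu> t)"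
  unfolding lslice_def by (induction t) (auto simp: scale_right_distrib)

lemma lslice_zero: "lslice scale (\<lambda>x. 0) t = 0"
  unfolding lslice_def by (induction t) auto

lemma lin_add: "lin_fun scale \<mu> \<Longrightarrow> lin_fun scale \<nu> \<Longrightarrow> lin_fun scale (\<lambda>x. \<mu> x + \<nu> x)"
  unfolding lin_fun_def by (auto simp: algebra_simps)

lemma lin_smult: "lin_fun scale \<nu> \<Longrightarrow> lin_fun scale (\<lambda>x. c * \<nu> x)"
  unfolding lin_fun_def by (auto simp: algebra_simps)

lemma lin_0: "lin_fun scale (\<lambda>x. 0)"
  unfolding lin_fun_def by auto

lemma extend_lin:
  assumes V0: "0 \<in> V" and Vadd: "\<forall>x\<in>V. \<forall>y\<in>V. x+y \<in> V" and Vsc: "\<forall>c. \<forall>x\<in>V. scale c x \<in> V"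
  and add: "\<forall>x\<in>V. \<forall>y\<in>V. \<phi> (x+y) = \<phi> x + \<phi> y" and hom: "\<forall>c. \<forall>x\<in>V. \<phi> (scale c x) = c * \<phi> x"
  shows "\<exists>\<psi>. lin_fun scale \<psi> \<and> (\<forall>x\<in>V. \<psi> x = \<phi> x)"
proof -
  obtain B where B: "B \<subseteq> V" "independent B" "V \<subseteq> span B" using maximal_independent_subset by blast
  interpret p: vector_space_pair scale "(*) :: 'a \<Rightarrow> 'a \<Rightarrow> 'a"
    using vs_mult vector_space_axioms by (simp add: vector_space_pair_def)
  obtain g where g: "Vector_Spaces.linear scale (*) g" "\<forall>x\<in>B. g x = \<phi> x"
    using p.linear_independent_extend[OF B(2)] by blast
  have gl: "lin_fun scale g" using p.linear_add[OF g(1)] p.linear_scale[OF g(1)] unfolding lin_fun_def by auto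
  have phi0: "\<phi> 0 = 0" using hom V0 by (metis mult_zero_left scale_zero_left)
  have "x \<in> V \<and> g x = \<phi> x" if "x \<in> span B" for x
    using that
  proof (induction rule: span_induct_alt)
    case base
    then show ?case using V0 phi0 lin_zero[OF gl] by simp
  next
    case (step c x y)
    have xV: "x \<in> V" using step B by auto
    have "scale c x \<in> V" using Vsc xV by auto
    then show ?case using step Vadd add hom xV gl g(2) unfolding lin_fun_def by auto
  qed
  then show ?thesis using gl B by blast
qed

lemma separate:
  assumes "x \<noteq> 0" shows "\<exists>\<rho>. lin_fun scale \<rho> \<and> \<rho> x \<noteq> 0"
proof -
  interpret p: vector_space_pair scale "(*) :: 'a \<Rightarrow> 'a \<Rightarrow> 'a"
    using vs_mult vector_space_axioms by (simp add: vector_space_pair_def)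
  have "independent {x}" using assms by simp
  then obtain g where g: "Vector_Spaces.linear scale (*) g" "\<forall>y\<in>{x}. g y = 1"
    using p.linear_independent_extend[of "{x}" "\<lambda>_. 1"] by blast
  have gl: "lin_fun scale g" using p.linear_add[OF g(1)] p.linear_scale[OF g(1)] unfolding lin_fun_def by auto
  then show ?thesis using g by auto
qed

lemma ext_eq:
  assumes "\<And>\<rho>. lin_fun scale \<rho> \<Longrightarrow> \<rho> a = \<rho> b" shows "a = b"
proof (rule ccontr)
  assume "a \<noteq> b"
  then obtain \<rho> where r: "lin_fun scale \<rho>" "\<rho> (a - b) \<noteq> 0" using separate[of "a - b"] by auto
  have "\<rho> (a - b) + \<rho> b = \<rho> a" using r(1) unfolding lin_fun_def by (metis diff_add_cancel)
  then show False using r assms[OF r(1)] by auto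
qed

end
theorem mainTheorem14:
  fixes sc :: "'k::field \<Rightarrow> 'c::ab_group_add \<Rightarrow> 'c"
    and \<Delta> :: "'c \<Rightarrow> ('c \<times> 'c) list"
    and g \<Lambda> :: 'c
  assumes "coalgebra sc \<Delta>"
    and "group_like sc \<Delta> g"
  shows "(g \<in> V_right sc \<Delta> \<Lambda> \<longrightarrow> fun_dim (cointegrals sc \<Delta> g (V_left sc \<Delta> \<Lambda>)) = 1)
       \<and> (g \<notin> V_right sc \<Delta> \<Lambda> \<longrightarrow> fun_dim (cointegrals sc \<Delta> g (V_left sc \<Delta> \<Lambda>)) = 0)
       \<and> (\<forall>\<phi>\<in>cointegrals sc \<Delta> g (V_left sc \<Delta> \<Lambda>). \<phi> \<noteq> (\<lambda>_. 0) \<longleftrightarrow> \<phi> \<Lambda> \<noteq> 0)"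
proof -
  interpret vector_space sc using assms(1) unfolding coalgebra_def by auto
  interpret FS: vector_space "(\<lambda>c f x. c * f x) :: 'k \<Rightarrow> ('c \<Rightarrow> 'k) \<Rightarrow> 'c \<Rightarrow> 'k"
    by (rule vs_fun)
  have linD: "lin_fun sc (\<lambda>a. tens_eval \<mu> \<nu> (\<Delta> a))" if "lin_fun sc \<mu>" "lin_fun sc \<nu>" for \<mu> \<nu>
    using assms(1) that unfolding coalgebra_def by blast
  have coass: "(\<Sum>(x,y)\<leftarrow>\<Delta> a. tens_eval \<mu> \<nu> (\<Delta> x) * \<rho> y)
        = (\<Sum>(x,y)\<leftarrow>\<Delta> a. \<mu> x * tens_eval \<nu> \<rho> (\<Delta> y))"
    if "lin_fun sc \<mu>" "lin_fun sc \<nu>" "lin_fun sc \<rho>" for \<mu> \<nu> \<rho> a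
    using assms(1) that unfolding coalgebra_def by blast
  obtain \<epsilon> where eps: "lin_fun sc \<epsilon>" "\<And>a. lslice sc \<epsilon> (\<Delta> a) = a"
    using assms(1) unfolding coalgebra_def by blast
  have glk: "tens_eval \<mu> \<nu> (\<Delta> g) = \<mu> g * \<nu> g" if "lin_fun sc \<mu>" "lin_fun sc \<nu>" for \<mu> \<nu>
    using assms(2) that unfolding group_like_def by auto
  have g0: "g \<noteq> 0" using assms(2) unfolding group_like_def by auto
  define V where "V = V_left sc \<Delta> \<Lambda>"
  define L where "L = cointegrals sc \<Delta> g V"
  have Vdef: "x \<in> V \<longleftrightarrow> (\<exists>\<nu>. lin_fun sc \<nu> \<and> x = lslice sc \<nu> (\<Delta> \<Lambda>))" for x
    unfolding V_def V_left_def by auto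
  have LamV: "\<Lambda> \<in> V" using eps Vdef by metis
  have V0: "0 \<in> V" using Vdef lslice_zero lin_0 by metis
  have Vadd: "\<forall>x\<in>V. \<forall>y\<in>V. x+y \<in> V"
  proof (intro ballI)
    fix x y assume "x \<in> V" "y \<in> V"
    then obtain \<mu> \<nu> where "lin_fun sc \<mu>" "x = lslice sc \<mu> (\<Delta> \<Lambda>)" "lin_fun sc \<nu>" "y = lslice sc \<nu> (\<Delta> \<Lambda>)"
      using Vdef by metis
    then show "x + y \<in> V" using Vdef lslice_add lin_add by metis
  qed
  have Vsc: "\<forall>c. \<forall>x\<in>V. sc c x \<in> V"
  proof (intro allI ballI)
    fix c x assume "x \<in> V"
    then obtain \<nu> where "lin_fun sc \<nu>" "x = lslice sc \<nu> (\<Delta> \<Lambda>)"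
      using Vdef by metis
    then show "sc c x \<in> V" using Vdef lslice_scale lin_smult by metis
  qed
  have epsg: "\<epsilon> g = 1"
  proof -
    obtain \<rho> where r: "lin_fun sc \<rho>" "\<rho> g \<noteq> 0" using separate g0 by blast
    have "\<rho> g = \<rho> (lslice sc \<epsilon> (\<Delta> g))" using eps by simp
    also have "\<dots> = tens_eval \<epsilon> \<rho> (\<Delta> g)" by (rule lin_lslice[OF r(1)])
    also have "\<dots> = \<epsilon> g * \<rho> g" using glk eps r by simp
    finally show ?thesis using r(2) by simp
  qed
  have Lprops: "(\<forall>x\<in>V. \<forall>y\<in>V. \<phi> (x + y) = \<phi> x + \<phi> y) \<and>
     (\<forall>c. \<forall>x\<in>V. \<phi> (sc c x) = c * \<phi> x) \<and>
     (\<forall>x. x \<notin> V \<longrightarrow> \<phi> x = 0) \<and>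
     (\<forall>\<psi>. lin_fun sc \<psi> \<and> (\<forall>x\<in>V. \<psi> x = \<phi> x) \<longrightarrow>
        (\<forall>a\<in>V. rslice sc \<psi> (\<Delta> a) = sc (\<phi> a) g))" if "\<phi> \<in> L" for \<phi>
    using that unfolding L_def cointegrals_def by auto
  have ext: "\<exists>\<psi>. lin_fun sc \<psi> \<and> (\<forall>x\<in>V. \<psi> x = \<phi> x) \<and> rslice sc \<psi> (\<Delta> \<Lambda>) = sc (\<phi> \<Lambda>) g"
    if "\<phi> \<in> L" for \<phi>
  proof -
    note P = Lprops[OF that]
    obtain \<psi> where \<psi>: "lin_fun sc \<psi>" "\<forall>x\<in>V. \<psi> x = \<phi> x"
      using extend_lin[OF V0 Vadd Vsc] P by blast
    then show ?thesis using P LamV by blast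
  qed
  have U: "\<phi> (lslice sc \<nu> (\<Delta> \<Lambda>)) = \<phi> \<Lambda> * \<nu> g" if phL: "\<phi> \<in> L" and ln: "lin_fun sc \<nu>" for \<phi> \<nu>
  proof -
    obtain \<psi> where \<psi>: "lin_fun sc \<psi>" "\<forall>x\<in>V. \<psi> x = \<phi> x" "rslice sc \<psi> (\<Delta> \<Lambda>) = sc (\<phi> \<Lambda>) g"
      using ext[OF phL] by blast
    have "lslice sc \<nu> (\<Delta> \<Lambda>) \<in> V" using Vdef ln by blast
    then have "\<phi> (lslice sc \<nu> (\<Delta> \<Lambda>)) = \<psi> (lslice sc \<nu> (\<Delta> \<Lambda>))" using \<psi> by simp
    also have "\<dots> = tens_eval \<nu> \<psi> (\<Delta> \<Lambda>)" by (rule lin_lslice[OF \<psi>(1)])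
    also have "\<dots> = \<nu> (rslice sc \<psi> (\<Delta> \<Lambda>))" by (rule lin_rslice[OF ln, symmetric])
    also have "\<dots> = \<nu> (sc (\<phi> \<Lambda>) g)" using \<psi> by simp
    also have "\<dots> = \<phi> \<Lambda> * \<nu> g" using ln unfolding lin_fun_def by simp
    finally show ?thesis .
  qed
  have zeroL: "\<phi> = (\<lambda>_. 0)" if "\<phi> \<in> L" "\<phi> \<Lambda> = 0" for \<phi>
  proof
    fix x show "\<phi> x = 0"
    proof (cases "x \<in> V")
      case True
      then obtain \<nu> where "lin_fun sc \<nu>" "x = lslice sc \<nu> (\<Delta> \<Lambda>)" using Vdef by metis
      then show ?thesis using U[OF that(1)] that(2) by simp
    next
      case False
      then show ?thesis using Lprops[OF that(1)] by blast
    qed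
  qed
  have part3: "\<forall>\<phi>\<in>L. \<phi> \<noteq> (\<lambda>_. 0) \<longleftrightarrow> \<phi> \<Lambda> \<noteq> 0"
    using zeroL by auto
  have part2: "fun_dim L = 0" if ng: "g \<notin> V_right sc \<Delta> \<Lambda>"
  proof -
    have sub: "L \<subseteq> {0}"
    proof
      fix \<phi> assume phL: "\<phi> \<in> L"
      have "\<phi> \<Lambda> = 0"
      proof (rule ccontr)
        assume nz: "\<phi> \<Lambda> \<noteq> 0"
        obtain \<psi> where \<psi>: "lin_fun sc \<psi>" "rslice sc \<psi> (\<Delta> \<Lambda>) = sc (\<phi> \<Lambda>) g"
          using ext[OF phL] by blast
        define \<mu> where "\<mu> = (\<lambda>x. inverse (\<phi> \<Lambda>) * \<psi> x)"
        have lm: "lin_fun sc \<mu>" unfolding \<mu>_def by (rule lin_smult[OF \<psi>(1)])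
        have "rslice sc \<mu> (\<Delta> \<Lambda>) = g"
        proof (rule ext_eq)
          fix \<rho> assume r: "lin_fun sc \<rho>"
          have "\<rho> (rslice sc \<mu> (\<Delta> \<Lambda>)) = tens_eval \<rho> \<mu> (\<Delta> \<Lambda>)" by (rule lin_rslice[OF r])
          also have "\<dots> = inverse (\<phi> \<Lambda>) * tens_eval \<rho> \<psi> (\<Delta> \<Lambda>)" unfolding \<mu>_def by (rule tens_scale)
          also have "\<dots> = inverse (\<phi> \<Lambda>) * \<rho> (rslice sc \<psi> (\<Delta> \<Lambda>))" using lin_rslice[OF r] by simp
          also have "\<dots> = inverse (\<phi> \<Lambda>) * (\<phi> \<Lambda> * \<rho> g)" using \<psi>(2) r unfolding lin_fun_def by simp
          also have "\<dots> = \<rho> g" using nz by simp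
          finally show "\<rho> (rslice sc \<mu> (\<Delta> \<Lambda>)) = \<rho> g" .
        qed
        then have "g \<in> V_right sc \<Delta> \<Lambda>" using lm unfolding V_right_def by blast
        then show False using ng by simp
      qed
      then show "\<phi> \<in> {0}" using zeroL[OF phL] by (simp add: zero_fun_def)
    qed
    have "FS.dim L = 0"
      by (rule FS.dim_unique[of "{}"]) (use sub FS.independent_empty in auto)
    then show ?thesis unfolding fun_dim_def .
  qed
  have part1: "fun_dim L = 1" if yg: "g \<in> V_right sc \<Delta> \<Lambda>"
  proof -
    obtain \<mu> where lm: "lin_fun sc \<mu>" and gm: "g = rslice sc \<mu> (\<Delta> \<Lambda>)"
      using yg unfolding V_right_def by blast
    have key: "\<mu> (lslice sc \<nu> (\<Delta> \<Lambda>)) = \<nu> g" if "lin_fun sc \<nu>" for \<nu>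
      using lin_lslice[OF lm] lin_rslice[OF that] gm by simp
    define \<phi>0 where "\<phi>0 = (\<lambda>x. if x \<in> V then \<mu> x else 0)"
    have \<phi>0L: "\<phi>0 \<in> L"
      unfolding L_def cointegrals_def mem_Collect_eq
    proof (intro conjI allI ballI impI)
      fix x y assume "x \<in> V" "y \<in> V"
      then show "\<phi>0 (x + y) = \<phi>0 x + \<phi>0 y" using Vadd lm unfolding \<phi>0_def lin_fun_def by auto
    next
      fix c x assume "x \<in> V"
      then show "\<phi>0 (sc c x) = c * \<phi>0 x" using Vsc lm unfolding \<phi>0_def lin_fun_def by auto
    next
      fix x assume "x \<notin> V" then show "\<phi>0 x = 0" unfolding \<phi>0_def by simp
    next
      fix \<psi> a assume H: "lin_fun sc \<psi> \<and> (\<forall>x\<in>V. \<psi> x = \<phi>0 x)" and aV: "a \<in> V"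
      then have l\<psi>: "lin_fun sc \<psi>" and e\<psi>: "\<forall>x\<in>V. \<psi> x = \<mu> x" unfolding \<phi>0_def by auto
      obtain \<nu> where l\<nu>: "lin_fun sc \<nu>" and a: "a = lslice sc \<nu> (\<Delta> \<Lambda>)" using aV Vdef by metis
      show "rslice sc \<psi> (\<Delta> a) = sc (\<phi>0 a) g"
      proof (rule ext_eq)
        fix \<rho> assume r: "lin_fun sc \<rho>"
        define T where "T = (\<lambda>a. tens_eval \<rho> \<psi> (\<Delta> a))"
        define S where "S = (\<lambda>x. tens_eval \<nu> \<rho> (\<Delta> x))"
        have lT: "lin_fun sc T" unfolding T_def by (rule linD[OF r l\<psi>])
        have lS: "lin_fun sc S" unfolding S_def by (rule linD[OF l\<nu> r])
        have SV: "lslice sc S (\<Delta> \<Lambda>) \<in> V" using Vdef lS by blast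
        have "\<rho> (rslice sc \<psi> (\<Delta> a)) = T a" unfolding T_def by (rule lin_rslice[OF r])
        also have "\<dots> = tens_eval \<nu> T (\<Delta> \<Lambda>)" unfolding a by (rule lin_lslice[OF lT])
        also have "\<dots> = (\<Sum>(x,y)\<leftarrow>\<Delta> \<Lambda>. \<nu> x * tens_eval \<rho> \<psi> (\<Delta> y))"
          unfolding T_def by (simp add: tens_eval_def)
        also have "\<dots> = (\<Sum>(x,y)\<leftarrow>\<Delta> \<Lambda>. tens_eval \<nu> \<rho> (\<Delta> x) * \<psi> y)"
          by (rule coass[OF l\<nu> r l\<psi>, symmetric])
        also have "\<dots> = tens_eval S \<psi> (\<Delta> \<Lambda>)"
          unfolding S_def by (simp add: tens_eval_def)
        also have "\<dots> = \<psi> (lslice sc S (\<Delta> \<Lambda>))" by (rule lin_lslice[OF l\<psi>, symmetric])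
        also have "\<dots> = \<mu> (lslice sc S (\<Delta> \<Lambda>))" using e\<psi> SV by simp
        also have "\<dots> = S g" by (rule key[OF lS])
        also have "\<dots> = \<nu> g * \<rho> g" unfolding S_def by (rule glk[OF l\<nu> r])
        also have "\<dots> = \<phi>0 a * \<rho> g" using aV key[OF l\<nu>] a unfolding \<phi>0_def by simp
        also have "\<dots> = \<rho> (sc (\<phi>0 a) g)" using r unfolding lin_fun_def by simp
        finally show "\<rho> (rslice sc \<psi> (\<Delta> a)) = \<rho> (sc (\<phi>0 a) g)" .
      qed
    qed
    have \<phi>0\<Lambda>: "\<phi>0 \<Lambda> = 1"
      using LamV key[OF eps(1)] eps(2)[of \<Lambda>] epsg unfolding \<phi>0_def by simp
    have nz: "\<phi>0 \<noteq> 0" using \<phi>0\<Lambda> by (metis one_neq_zero zero_fun_def)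
    have sub: "L \<subseteq> FS.span {\<phi>0}"
    proof
      fix \<phi> assume phL: "\<phi> \<in> L"
      have "\<phi> = (\<lambda>x. \<phi> \<Lambda> * \<phi>0 x)"
      proof
        fix x show "\<phi> x = \<phi> \<Lambda> * \<phi>0 x"
        proof (cases "x \<in> V")
          case True
          then obtain \<nu> where "lin_fun sc \<nu>" "x = lslice sc \<nu> (\<Delta> \<Lambda>)" using Vdef by metis
          then show ?thesis using U[OF phL] key True unfolding \<phi>0_def by simp
        next
          case False
          then show ?thesis using Lprops[OF phL] unfolding \<phi>0_def by simp
        qed
      qed
      moreover have "(\<lambda>x. \<phi> \<Lambda> * \<phi>0 x) \<in> FS.span {\<phi>0}"
        by (rule FS.span_scale[OF FS.span_base]) simp
      ultimately show "\<phi> \<in> FS.span {\<phi>0}" by simp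
    qed
    have "FS.dim L = 1"
      by (rule FS.dim_unique[of "{\<phi>0}"]) (use sub \<phi>0L nz in auto)
    then show ?thesis unfolding fun_dim_def .
  qed
  show ?thesis using part1 part2 part3 unfolding L_def V_def by blast
qed

end
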